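(* Let $O_1$ be an optimal solution of $I_1$ (assumed to exist). Then the optimal cost of the instance $I_2$ is at most $2\,\mathrm{Cost}_{I_1}(O_1)$.
   Context: An instance of LBUBFL with uniform bounds consists of a finite client set $\mathcal C$, a finite facility set $\mathcal F$, a metric $c$ on $\mathcal C\cup\mathcal F$, opening costs $f_i\ge0$, and integers $1\le\mathcal L\le\mathcal U$; a feasible solution opens $\mathcal F'\subseteq\mathcal F$ and assigns clients by $\sigma:\mathcal C\to\mathcal F'$ with $\mathcal L\le|\sigma^{-1}(i)|\le\mathcal U$ for all $i\in\mathcal F'$, at cost $\sum_{i\in\mathcal F'}f_i+\sum_jc(j,\sigma(j))$. Given a nonempty $\mathcal F^t\subseteq\mathcal F$ and an assignment $\sigma^t:\mathcal C\to\mathcal F^t$, the instance $I_1$ is the LBUBFL instance with the same clients, facilities and bounds, in which client $j$ is relocated to the location of $\sigma^t(j)$ (cost of serving $j$ by $i$ is $c(\sigma^t(j),i)$), with opening costs $f^1_i=0$ for $i\in\mathcal F^t$ and $f^1_i=f_i$ otherwise. The instance $I_2$ is the lower-bounded facility location instance (no upper bound) with facility set $\mathcal F^t$, all opening costs $0$, the same relocated clients, and lower bound $\mathcal L$: a feasible solution opens some $\mathcal F''\subseteq\mathcal F^t$ and assigns each client to an opened facility so that every opened facility receives at least $\mathcal L$ clients; its cost is $\sum_jc(\sigma^t(j),\sigma(j))$. *)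

theory Defs
  imports Complex_Main
begin

definition is_metric_on :: "'a set \<Rightarrow> ('a \<Rightarrow> 'a \<Rightarrow> real) \<Rightarrow> bool" where
  "is_metric_on X d \<longleftrightarrow>
     (\<forall>x\<in>X. d x x = 0) \<and>
     (\<forall>x\<in>X. \<forall>y\<in>X. d x y \<ge> 0 \<and> d x y = d y x) \<and>
     (\<forall>x\<in>X. \<forall>y\<in>X. \<forall>z\<in>X. d x z \<le> d x y + d y z)"

definition points :: "'c set \<Rightarrow> 'f set \<Rightarrow> ('c + 'f) set" where
  "points C F = Inl ` C \<union> Inr ` F"

text \<open>A solution is a pair (opened facilities, assignment).\<close>

definition feasible_LBUB ::
  "'c set \<Rightarrow> 'f set \<Rightarrow> nat \<Rightarrow> nat \<Rightarrow> 'f set \<times> ('c \<Rightarrow> 'f) \<Rightarrow> bool" where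
  "feasible_LBUB C F L U S \<longleftrightarrow>
     fst S \<subseteq> F \<and> (\<forall>j\<in>C. snd S j \<in> fst S) \<and>
     (\<forall>i\<in>fst S. L \<le> card {j\<in>C. snd S j = i} \<and> card {j\<in>C. snd S j = i} \<le> U)"

definition cost_FL ::
  "'c set \<Rightarrow> ('f \<Rightarrow> real) \<Rightarrow> ('c \<Rightarrow> 'f \<Rightarrow> real) \<Rightarrow> 'f set \<times> ('c \<Rightarrow> 'f) \<Rightarrow> real" where
  "cost_FL C fc s S = (\<Sum>i\<in>fst S. fc i) + (\<Sum>j\<in>C. s j (snd S j))"

definition optimal_LBUB ::
  "'c set \<Rightarrow> 'f set \<Rightarrow> ('f \<Rightarrow> real) \<Rightarrow> ('c \<Rightarrow> 'f \<Rightarrow> real) \<Rightarrow> nat \<Rightarrow> nat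
    \<Rightarrow> 'f set \<times> ('c \<Rightarrow> 'f) \<Rightarrow> bool" where
  "optimal_LBUB C F fc s L U S \<longleftrightarrow>
     feasible_LBUB C F L U S \<and>
     (\<forall>S'. feasible_LBUB C F L U S' \<longrightarrow> cost_FL C fc s S \<le> cost_FL C fc s S')"

definition feasible_LB :: "'c set \<Rightarrow> 'f set \<Rightarrow> nat \<Rightarrow> 'f set \<times> ('c \<Rightarrow> 'f) \<Rightarrow> bool" where
  "feasible_LB C F L S \<longleftrightarrow>
     fst S \<subseteq> F \<and> (\<forall>j\<in>C. snd S j \<in> fst S) \<and>
     (\<forall>i\<in>fst S. L \<le> card {j\<in>C. snd S j = i})"

definition opt_cost_LB ::
  "'c set \<Rightarrow> 'f set \<Rightarrow> ('f \<Rightarrow> real) \<Rightarrow> ('c \<Rightarrow> 'f \<Rightarrow> real) \<Rightarrow> nat \<Rightarrow> real" where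
  "opt_cost_LB C F fc s L = Inf {cost_FL C fc s S | S. feasible_LB C F L S}"

text \<open>The instances I_1 and I_2 built from (F^t, sigma^t).\<close>

definition serv_reloc :: "(('c + 'f) \<Rightarrow> ('c + 'f) \<Rightarrow> real) \<Rightarrow> ('c \<Rightarrow> 'f) \<Rightarrow> 'c \<Rightarrow> 'f \<Rightarrow> real" where
  "serv_reloc d \<sigma>t j i = d (Inr (\<sigma>t j)) (Inr i)"

definition open_cost_I1 :: "('f \<Rightarrow> real) \<Rightarrow> 'f set \<Rightarrow> 'f \<Rightarrow> real" where
  "open_cost_I1 fc Ft i = (if i \<in> Ft then 0 else fc i)"

end

theory Submission
  imports Defs
begin

theorem lemma3p2:
  fixes C :: "'c set" and F Ft :: "'f set" and d :: "('c + 'f) \<Rightarrow> ('c + 'f) \<Rightarrow> real"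
    and fc :: "'f \<Rightarrow> real" and L U :: nat and \<sigma>t :: "'c \<Rightarrow> 'f"
    and O1 :: "'f set \<times> ('c \<Rightarrow> 'f)"
  assumes "finite C" and "finite F"
    and "is_metric_on (points C F) d"
    and "\<forall>i\<in>F. fc i \<ge> 0"
    and "1 \<le> L" and "L \<le> U"
    and "Ft \<subseteq> F" and "Ft \<noteq> {}"
    and "\<forall>j\<in>C. \<sigma>t j \<in> Ft"
    and "optimal_LBUB C F (open_cost_I1 fc Ft) (serv_reloc d \<sigma>t) L U O1"
  shows "opt_cost_LB C Ft (\<lambda>_. 0) (serv_reloc d \<sigma>t) L
           \<le> 2 * cost_FL C (open_cost_I1 fc Ft) (serv_reloc d \<sigma>t) O1"
proof -
  obtain S \<sigma> where O1: "O1 = (S, \<sigma>)" by fastforce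
  have feas: "feasible_LBUB C F L U (S, \<sigma>)" using assms(10) O1 by (simp add: optimal_LBUB_def)
  hence SF: "S \<subseteq> F" and \<sigma>S: "\<forall>j\<in>C. \<sigma> j \<in> S"
    and LS: "\<forall>i\<in>S. L \<le> card {j\<in>C. \<sigma> j = i}" by (auto simp: feasible_LBUB_def)
  have finFt: "finite Ft" using assms(2,7) finite_subset by blast
  have M: "is_metric_on (points C F) d" by fact
  have inpts: "\<And>i. i \<in> F \<Longrightarrow> Inr i \<in> points C F" by (simp add: points_def)
  have exmin: "\<And>i. \<exists>k. k \<in> Ft \<and> (\<forall>k'\<in>Ft. d (Inr i) (Inr k) \<le> d (Inr i) (Inr k'))"
  proof -
    fix i
    let ?A = "(\<lambda>k. d (Inr i) (Inr k)) ` Ft"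
    have fa: "finite ?A" "?A \<noteq> {}" using finFt assms(8) by auto
    then obtain k where k: "k \<in> Ft" "d (Inr i) (Inr k) = Min ?A" using Min_in[OF fa] by (metis (no_types, lifting) imageE)
    have "\<forall>k'\<in>Ft. d (Inr i) (Inr k) \<le> d (Inr i) (Inr k')" using k(2) Min_le[OF fa(1)] by auto
    thus "?thesis i" using k(1) by blast
  qed
  define \<eta> where "\<eta> i = (SOME k. k \<in> Ft \<and> (\<forall>k'\<in>Ft. d (Inr i) (Inr k) \<le> d (Inr i) (Inr k')))" for i
  have \<eta>: "\<eta> i \<in> Ft \<and> (\<forall>k'\<in>Ft. d (Inr i) (Inr (\<eta> i)) \<le> d (Inr i) (Inr k'))" for i
    unfolding \<eta>_def by (rule someI_ex, rule exmin)
  define S2 where "S2 = (\<eta> ` S, \<lambda>j. \<eta> (\<sigma> j))"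
  have feas2: "feasible_LB C Ft L S2"
    unfolding feasible_LB_def S2_def
  proof (intro conjI ballI)
    show "fst (\<eta> ` S, \<lambda>j. \<eta> (\<sigma> j)) \<subseteq> Ft" using \<eta> by auto
    fix j assume "j \<in> C" thus "snd (\<eta> ` S, \<lambda>j. \<eta> (\<sigma> j)) j \<in> fst (\<eta> ` S, \<lambda>j. \<eta> (\<sigma> j))"
      using \<sigma>S by auto
  next
    fix k assume "k \<in> fst (\<eta> ` S, \<lambda>j. \<eta> (\<sigma> j))"
    then obtain i where i: "i \<in> S" "k = \<eta> i" by auto
    have "L \<le> card {j\<in>C. \<sigma> j = i}" using LS i by auto
    also have "\<dots> \<le> card {j\<in>C. \<eta> (\<sigma> j) = k}"
      by (rule card_mono) (use assms(1) i in auto)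
    finally show "L \<le> card {j \<in> C. snd (\<eta> ` S, \<lambda>j. \<eta> (\<sigma> j)) j = k}" by simp
  qed
  have pt: "serv_reloc d \<sigma>t j (\<eta> (\<sigma> j)) \<le> 2 * serv_reloc d \<sigma>t j (\<sigma> j)" if j: "j \<in> C" for j
  proof -
    have a: "Inr (\<sigma>t j) \<in> points C F" using assms(7,9) j inpts by blast
    have b: "Inr (\<sigma> j) \<in> points C F" using SF \<sigma>S j inpts by blast
    have c: "Inr (\<eta> (\<sigma> j)) \<in> points C F" using \<eta> assms(7) inpts by blast
    have tri: "d (Inr (\<sigma>t j)) (Inr (\<eta> (\<sigma> j))) \<le> d (Inr (\<sigma>t j)) (Inr (\<sigma> j)) + d (Inr (\<sigma> j)) (Inr (\<eta> (\<sigma> j)))"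
      using M a b c unfolding is_metric_on_def by blast
    have mn: "d (Inr (\<sigma> j)) (Inr (\<eta> (\<sigma> j))) \<le> d (Inr (\<sigma> j)) (Inr (\<sigma>t j))"
      using \<eta> assms(9) j by blast
    have sym: "d (Inr (\<sigma> j)) (Inr (\<sigma>t j)) = d (Inr (\<sigma>t j)) (Inr (\<sigma> j))"
      using M a b unfolding is_metric_on_def by metis
    show ?thesis using tri mn sym by (simp add: serv_reloc_def)
  qed
  have nonneg: "0 \<le> serv_reloc d \<sigma>t j i" if "j \<in> C" "i \<in> F" for j i
    using M inpts that assms(7,9) unfolding is_metric_on_def serv_reloc_def by blast
  have bdd: "bdd_below {cost_FL C (\<lambda>_. 0) (serv_reloc d \<sigma>t) S | S. feasible_LB C Ft L S}"
  proof (rule bdd_belowI[of _ 0], clarify)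
    fix S' assume "feasible_LB C Ft L S'"
    hence "\<forall>j\<in>C. snd S' j \<in> F" using assms(7) unfolding feasible_LB_def by blast
    thus "0 \<le> cost_FL C (\<lambda>_. 0) (serv_reloc d \<sigma>t) S'"
      unfolding cost_FL_def using nonneg by (simp add: sum_nonneg)
  qed
  have "opt_cost_LB C Ft (\<lambda>_. 0) (serv_reloc d \<sigma>t) L \<le> cost_FL C (\<lambda>_. 0) (serv_reloc d \<sigma>t) S2"
    unfolding opt_cost_LB_def by (rule cInf_lower) (use feas2 bdd in blast)+
  also have "\<dots> = (\<Sum>j\<in>C. serv_reloc d \<sigma>t j (\<eta> (\<sigma> j)))" by (simp add: cost_FL_def S2_def)
  also have "\<dots> \<le> (\<Sum>j\<in>C. 2 * serv_reloc d \<sigma>t j (\<sigma> j))" by (rule sum_mono) (rule pt)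
  also have "\<dots> = 2 * (\<Sum>j\<in>C. serv_reloc d \<sigma>t j (\<sigma> j))" by (simp add: sum_distrib_left)
  also have "\<dots> \<le> 2 * cost_FL C (open_cost_I1 fc Ft) (serv_reloc d \<sigma>t) O1"
  proof -
    have "0 \<le> (\<Sum>i\<in>S. open_cost_I1 fc Ft i)"
      using SF assms(4) by (intro sum_nonneg) (auto simp: open_cost_I1_def)
    thus ?thesis by (simp add: cost_FL_def O1)
  qed
  finally show ?thesis .
qed

end
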